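(* Let $n,m\ge 1$, let $c_1,\dots,c_n>0$, $T>0$, $\epsilon>0$, let $r_1,\dots,r_m>0$, and let $\kappa_{ij}\ge 0$ ($i=1,\dots,m$, $j=1,\dots,n$). For $j=1,\dots,n$ define $\beta_j:\mathbb{R}\to\mathbb{R}$ by $\beta_j(q_j)=0$ if $q_j\le c_j$ and $\beta_j(q_j)=q_j-c_j-c_j\log(q_j/c_j)$ if $q_j>c_j$. Consider the optimization problem in the variables $X=(x_{ij})\in\mathbb{R}^{m\times n}$ and $q=(q_j)\in\mathbb{R}^n$: $$\min\ C(X,q):=\sum_{i,j}\kappa_{ij}x_{ij}+\sum_j\beta_j(q_j)+\epsilon\sum_{i,j}x_{ij}\log\Big(\frac{x_{ij}}{r_i}\Big)$$ subject to $x_{ij}\ge 0$ for all $i,j$; $\sum_j x_{ij}=r_i$ for all $i$; and $\sum_i x_{ij}=q_j/T$ for all $j$. Then this problem is feasible and has a unique optimal point $(X^*,q^* )$.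
   Context: The convention $0\log 0=0$ is used in the entropy term. Interpretation: $j$ indexes EV charging stations with capacities $c_j$, $i$ indexes demand locations with request rates $r_i$, $\kappa_{ij}$ are travel times, $T$ is the mean sojourn time. *)

theory Defs
  imports "HOL-Analysis.Analysis"
begin

text \<open>Indices: demand locations i \<in> {..<m}, stations j \<in> {..<n}.
  Matrices/vectors are functions on nat, required to vanish outside the index range
  so that optimal points are represented canonically.\<close>

definition beta :: "real \<Rightarrow> real \<Rightarrow> real" where
  "beta c q = (if q \<le> c then 0 else q - c - c * ln (q / c))"

definition xlogx_r :: "real \<Rightarrow> real \<Rightarrow> real" where
  "xlogx_r x r = (if x = 0 then 0 else x * ln (x / r))"

definition cost ::
  "nat \<Rightarrow> nat \<Rightarrow> (nat \<Rightarrow> real) \<Rightarrow> (nat \<Rightarrow> real) \<Rightarrow> (nat \<Rightarrow> nat \<Rightarrow> real) \<Rightarrow> real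
   \<Rightarrow> (nat \<Rightarrow> nat \<Rightarrow> real) \<Rightarrow> (nat \<Rightarrow> real) \<Rightarrow> real" where
  "cost m n c r \<kappa> \<epsilon> X q =
     (\<Sum>i<m. \<Sum>j<n. \<kappa> i j * X i j) + (\<Sum>j<n. beta (c j) (q j))
     + \<epsilon> * (\<Sum>i<m. \<Sum>j<n. xlogx_r (X i j) (r i))"

definition feasible ::
  "nat \<Rightarrow> nat \<Rightarrow> (nat \<Rightarrow> real) \<Rightarrow> real \<Rightarrow> (nat \<Rightarrow> nat \<Rightarrow> real) \<Rightarrow> (nat \<Rightarrow> real) \<Rightarrow> bool" where
  "feasible m n r T X q \<longleftrightarrow>
     (\<forall>i<m. \<forall>j<n. X i j \<ge> 0) \<and>
     (\<forall>i<m. (\<Sum>j<n. X i j) = r i) \<and>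
     (\<forall>j<n. (\<Sum>i<m. X i j) = q j / T) \<and>
     (\<forall>i j. (i \<ge> m \<or> j \<ge> n) \<longrightarrow> X i j = 0) \<and>
     (\<forall>j\<ge>n. q j = 0)"

definition optimal ::
  "nat \<Rightarrow> nat \<Rightarrow> (nat \<Rightarrow> real) \<Rightarrow> (nat \<Rightarrow> real) \<Rightarrow> real \<Rightarrow> (nat \<Rightarrow> nat \<Rightarrow> real) \<Rightarrow> real
   \<Rightarrow> (nat \<Rightarrow> nat \<Rightarrow> real) \<Rightarrow> (nat \<Rightarrow> real) \<Rightarrow> bool" where
  "optimal m n c r T \<kappa> \<epsilon> X q \<longleftrightarrow>
     feasible m n r T X q \<and>
     (\<forall>Y p. feasible m n r T Y p \<longrightarrow> cost m n c r \<kappa> \<epsilon> X q \<le> cost m n c r \<kappa> \<epsilon> Y p)"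

end

theory Submission
  imports Defs "HOL-Real_Asymp.Real_Asymp"
begin

lemma ln_gt: fixes z::real assumes "z>0" "z\<noteq>1" shows "ln z > 1 - 1/z"
proof -
  have "ln (1/z) < 1/z - 1" using assms
    by (metis divide_pos_pos eq_divide_eq_1 ln_eq_minus_one ln_le_minus_one nless_le)
  then show ?thesis using assms by (simp add: ln_div)
qed

lemma xlog_alt: fixes x r :: real assumes "x \<ge> 0" "r > 0"
  shows "xlogx_r x r = x * ln x - x * ln r"
  using assms by (cases "x = 0") (auto simp: xlogx_r_def ln_div algebra_simps)

lemma xln_gt: fixes x s :: real assumes "x>0" "s>0" "x \<noteq> s"
  shows "x * ln x - x * ln s > x - s"
proof -
  have "ln (x/s) > 1 - 1/(x/s)" using assms by (intro ln_gt) auto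
  then have "x * ln (x/s) > x * (1 - s/x)" using assms by (intro mult_strict_left_mono) auto
  then show ?thesis using assms by (simp add: ln_div algebra_simps)
qed

lemma aux_lin: "(A::real) = P - Q \<Longrightarrow> B = X1 - Y1 \<Longrightarrow> C = X2 - Y2 \<Longrightarrow> Q = (Y1+Y2)/2
  \<Longrightarrow> P < (X1+X2)/2 \<Longrightarrow> A < (B+C)/2" by (simp add: field_simps)

lemma aux_false: "(a::real) \<le> b \<Longrightarrow> b \<le> a \<Longrightarrow> a \<le> x \<Longrightarrow> x < (a+b)/2 \<Longrightarrow> False"
  by argo

lemma xlog_mid_strict: fixes x y r :: real assumes "x\<ge>0" "y\<ge>0" "x\<noteq>y" "r>0"
  shows "xlogx_r ((x+y)/2) r < (xlogx_r x r + xlogx_r y r)/2"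
proof -
  define s where "s = (x+y)/2"
  have s: "s > 0" using assms by (auto simp: s_def)
  have key: "s * ln s < (x * ln x + y * ln y)/2"
  proof (cases "x = 0 \<or> y = 0")
    case True
    then consider "x = 0" "y > 0" | "y = 0" "x > 0" using assms by force
    then show ?thesis
    proof cases
      case 1
      then have "ln (y/2) < ln y" by simp
      then show ?thesis using 1 by (simp add: s_def)
    next
      case 2
      then have "ln (x/2) < ln x" by simp
      then show ?thesis using 2 by (simp add: s_def)
    qed
  next
    case False
    then have "x > 0" "y > 0" using assms by auto
    moreover have "x \<noteq> s" "y \<noteq> s" using assms by (auto simp: s_def)
    ultimately have "x * ln x - x * ln s > x - s" "y * ln y - y * ln s > y - s"
      using s by (auto intro!: xln_gt)
    then have "x * ln x + y * ln y - (x + y) * ln s > x + y - 2 * s"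
      by (simp add: algebra_simps)
    moreover have e1: "(x + y) * ln s = 2 * (s * ln s)" and e2: "x + y - 2 * s = 0" by (simp_all add: s_def)
    ultimately have "x * ln x + y * ln y - (x + y) * ln s > 0" by linarith
    then have "x * ln x + y * ln y - 2 * (s * ln s) > 0" unfolding e1 .
    then show ?thesis by (simp add: field_simps)
  qed
  have "xlogx_r ((x+y)/2) r = s*ln s - s*ln r" using s assms by (simp add: xlog_alt s_def)
  moreover have "xlogx_r x r = x*ln x - x*ln r" "xlogx_r y r = y*ln y - y*ln r"
    using assms by (simp_all add: xlog_alt)
  moreover have "s * ln r = (x*ln r + y*ln r)/2" by (simp add: s_def field_simps)
  ultimately show ?thesis using key by (rule aux_lin)
qed

lemma xlog_mid: fixes x y r :: real assumes "x\<ge>0" "y\<ge>0" "r>0"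
  shows "xlogx_r ((x+y)/2) r \<le> (xlogx_r x r + xlogx_r y r)/2"
  using xlog_mid_strict[OF assms(1,2) _ assms(3)] by (cases "x = y") force+

lemma beta_alt: fixes c q :: real assumes "c > 0"
  shows "beta c q = max q c - c - c * ln (max q c / c)"
  using assms by (auto simp: beta_def max_def)

lemma g_mono: fixes c s t :: real assumes "c>0" "c \<le> s" "s \<le> t"
  shows "s - c * ln (s/c) \<le> t - c * ln (t/c)"
proof -
  have "ln (t/s) \<le> t/s - 1" using assms by (intro ln_le_minus_one) auto
  also have "\<dots> = (t - s)/s" using assms by (simp add: field_simps)
  also have "\<dots> \<le> (t - s)/c" using assms by (intro divide_left_mono) auto
  finally have "c * ln (t/s) \<le> t - s" using assms by (simp add: field_simps)
  moreover have "ln (t/c) = ln (t/s) + ln (s/c)" using assms by (simp add: ln_div)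
  ultimately show ?thesis by (simp add: ring_distribs)
qed

lemma ln_mid: fixes s t :: real assumes "s>0" "t>0"
  shows "(ln s + ln t)/2 \<le> ln ((s+t)/2)"
proof -
  have "((s+t)/2)^2 - s*t = ((s-t)/2)^2" by (simp add: power2_eq_square field_simps)
  then have "s * t \<le> ((s+t)/2)^2" by (smt (verit) zero_le_power2)
  then have "ln (s*t) \<le> ln (((s+t)/2)^2)" using assms by (subst ln_le_cancel_iff) auto
  then show ?thesis using assms by (simp add: ln_mult ln_realpow)
qed

lemma beta_mid: fixes c a b :: real assumes "c>0"
  shows "beta c ((a+b)/2) \<le> (beta c a + beta c b)/2"
proof -
  define a' b' m M where "a' = max a c" "b' = max b c" "m = max ((a+b)/2) c" "M = (a'+b')/2"
  have h: "c \<le> m" "m \<le> M" "c \<le> a'" "c \<le> b'" by (auto simp: a'_b'_m_M_def max_def)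
  have "beta c ((a+b)/2) = m - c - c * ln (m/c)" using assms by (simp add: beta_alt a'_b'_m_M_def)
  also have "\<dots> \<le> M - c - c * ln (M/c)" using g_mono[OF assms h(1,2)] by simp
  also have "\<dots> = M - c - c * (ln M - ln c)" using assms h by (simp add: ln_div)
  also have "\<dots> \<le> M - c - c * ((ln a' + ln b')/2 - ln c)"
    using ln_mid[of a' b'] assms h by (simp add: a'_b'_m_M_def)
  also have "\<dots> = ((a' - c - c * ln (a'/c)) + (b' - c - c * ln (b'/c)))/2"
  proof -
    have e: "ln (a'/c) = ln a' - ln c" "ln (b'/c) = ln b' - ln c" using assms h by (simp_all add: ln_div)
    have eM: "M = (a'+b')/2" by (simp add: a'_b'_m_M_def)
    show ?thesis by (simp only: e eM) (simp add: field_simps)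
  qed
  also have "\<dots> = (beta c a + beta c b)/2" using assms by (simp add: beta_alt a'_b'_m_M_def)
  finally show ?thesis .
qed

lemma beta_cont: fixes c :: real assumes "c>0" shows "continuous_on UNIV (beta c)"
proof -
  have "continuous_on UNIV (\<lambda>q. max q c - c - c * ln (max q c / c))"
    using assms by (intro continuous_intros) (auto simp: max_def)
  then show ?thesis using beta_alt[OF assms] by (simp add: fun_eq_iff[symmetric]) 
qed

lemma xlog_cont: fixes r :: real assumes "r>0" shows "continuous_on {0..} (\<lambda>x. xlogx_r x r)"
proof -
  have "continuous_on {0..} (\<lambda>x::real. x * ln x)"
    unfolding continuous_on_eq_continuous_within
  proof
    fix x :: real assume x: "x \<in> {0..}"
    show "continuous (at x within {0..}) (\<lambda>x. x * ln x)"
    proof (cases "x = 0")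
      case True
      have "((\<lambda>x::real. x * ln x) \<longlongrightarrow> 0) (at_right 0)" by real_asymp
      then show ?thesis using True by (simp add: continuous_within at_within_Ici_at_right)
    next
      case False
      then have "x > 0" using x by auto
      then have "isCont (\<lambda>x. x * ln x) x" by (intro continuous_intros) auto
      then show ?thesis by (rule continuous_at_imp_continuous_within)
    qed
  qed
  then have "continuous_on {0..} (\<lambda>x::real. x * ln x - x * ln r)"
    by (rule continuous_on_diff) (intro continuous_intros)
  then show ?thesis by (rule continuous_on_cong[THEN iffD1, rotated 2]) (auto simp: xlog_alt assms)
qed

lemma compact_PiE_UNIV:
  assumes "\<And>i. compact (A i)"
  shows "compact (PiE UNIV A :: ('a \<Rightarrow> 'b::topological_space) set)"
  using compactin_PiE[of "\<lambda>i. euclidean" UNIV A] assms by (simp add: euclidean_product_topology)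

lemma coord2 [continuous_intros]: "continuous_on A (\<lambda>X::nat\<Rightarrow>nat\<Rightarrow>real. X i j)"
proof -
  have "continuous_on UNIV (\<lambda>X::nat\<Rightarrow>nat\<Rightarrow>real. X i)" by simp
  then have "continuous_on UNIV (\<lambda>X::nat\<Rightarrow>nat\<Rightarrow>real. X i j)"
    by (rule continuous_on_product_then_coordinatewise)
  then show ?thesis by (rule continuous_on_subset) auto
qed

theorem proposition1:
  fixes m n :: nat and c r :: "nat \<Rightarrow> real" and \<kappa> :: "nat \<Rightarrow> nat \<Rightarrow> real"
    and T \<epsilon> :: real
  assumes "n \<ge> 1" and "m \<ge> 1"
    and "\<forall>j<n. c j > 0" and "T > 0" and "\<epsilon> > 0"
    and "\<forall>i<m. r i > 0"
    and "\<forall>i<m. \<forall>j<n. \<kappa> i j \<ge> 0"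
  shows "(\<exists>X q. feasible m n r T X q) \<and>
         (\<exists>!Xq. optimal m n c r T \<kappa> \<epsilon> (fst Xq) (snd Xq))"
proof -
  note n1 = assms(1) and m1 = assms(2) and cpos = assms(3) and Tpos = assms(4)
    and epos = assms(5) and rpos = assms(6)
  define qof where "qof X = (\<lambda>j. if j<n then T * (\<Sum>i<m. X i j) else 0)"
    for X :: "nat \<Rightarrow> nat \<Rightarrow> real"
  define S where "S = {X :: nat \<Rightarrow> nat \<Rightarrow> real. (\<forall>i<m. \<forall>j<n. X i j \<ge> 0) \<and>
      (\<forall>i<m. (\<Sum>j<n. X i j) = r i) \<and> (\<forall>i j. (i \<ge> m \<or> j \<ge> n) \<longrightarrow> X i j = 0)}"
  have feas_S: "feasible m n r T X q \<longleftrightarrow> X \<in> S \<and> q = qof X" for X q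
  proof
    assume f: "feasible m n r T X q"
    have "q = qof X"
    proof
      fix j show "q j = qof X j"
        using f Tpos by (cases "j < n") (auto simp: feasible_def qof_def field_simps)
    qed
    then show "X \<in> S \<and> q = qof X" using f by (auto simp: feasible_def S_def)
  next
    assume "X \<in> S \<and> q = qof X"
    then show "feasible m n r T X q" using Tpos by (auto simp: feasible_def S_def qof_def)
  qed
  define X0 where "X0 = (\<lambda>i j. if i<m \<and> j<n then r i / real n else (0::real))"
  have X0S: "X0 \<in> S" using n1 rpos by (auto simp: S_def X0_def less_imp_le)
  then have feas0: "feasible m n r T X0 (qof X0)" using feas_S by blast
  define B where "B i j = (if i<m \<and> j<n then {0..r i} else {0::real})" for i j
  define K where "K = PiE UNIV (\<lambda>i. PiE UNIV (\<lambda>j. B i j))"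
  have cK: "compact K" unfolding K_def B_def
    by (intro compact_PiE_UNIV) auto
  have SK: "S \<subseteq> K"
  proof
    fix X assume X: "X \<in> S"
    have "X i j \<in> B i j" for i j
    proof (cases "i<m \<and> j<n")
      case True
      then have "X i j \<le> (\<Sum>j'<n. X i j')" using X
        by (intro member_le_sum) (auto simp: S_def)
      then show ?thesis using True X by (auto simp: B_def S_def)
    next
      case False then show ?thesis using X by (auto simp: B_def S_def)
    qed
    then show "X \<in> K" by (auto simp: K_def)
  qed
  have clS: "closed S"
  proof -
    have "S = (\<Inter>i\<in>{..<m}. \<Inter>j\<in>{..<n}. {X. 0 \<le> X i j}) \<inter> (\<Inter>i\<in>{..<m}. {X. (\<Sum>j<n. X i j) = r i})
      \<inter> (\<Inter>i. \<Inter>j. (if i \<ge> m \<or> j \<ge> n then {X. X i j = 0} else UNIV))"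
      by (auto simp: S_def split: if_splits)
    moreover have "closed \<dots>"
      by (intro closed_Int closed_INT ballI closed_Collect_le closed_Collect_eq continuous_intros
          closed_UNIV allI) (auto intro!: closed_Collect_eq continuous_intros)
    ultimately show ?thesis by simp
  qed
  have cS: "compact S"
  proof -
    have "S = K \<inter> S" using SK by blast
    then show ?thesis using compact_Int_closed[OF cK clS] by simp
  qed
  define f where "f X = cost m n c r \<kappa> \<epsilon> X (qof X)" for X
  have contf: "continuous_on S f"
  proof -
    have bc: "continuous_on S (\<lambda>X. beta (c j) (qof X j))" if "j < n" for j
    proof -
      have q: "continuous_on S (\<lambda>X. qof X j)" unfolding qof_def using that
        by (auto intro!: continuous_intros)
      have bcj: "continuous_on UNIV (beta (c j))" using cpos that beta_cont by auto
      show ?thesis using continuous_on_compose2[OF bcj q] by auto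
    qed
    have xc: "continuous_on S (\<lambda>X. xlogx_r (X i j) (r i))" if "i < m" "j < n" for i j
    proof -
      have xr: "continuous_on {0..} (\<lambda>x. xlogx_r x (r i))" using xlog_cont rpos that by auto
      have p: "continuous_on S (\<lambda>X. X i j)" by (rule coord2)
      have im: "(\<lambda>X. X i j) ` S \<subseteq> {0..}" using that by (auto simp: S_def)
      show ?thesis using continuous_on_compose2[OF xr p im] by simp
    qed
    show ?thesis unfolding f_def cost_def
      by (intro continuous_on_add continuous_on_sum continuous_on_mult continuous_on_const coord2)
        (auto intro: bc xc)
  qed
  obtain Xm where XmS: "Xm \<in> S" and Xmin: "\<forall>Y\<in>S. f Xm \<le> f Y"
    using continuous_attains_inf[OF cS _ contf] X0S by blast
  have optm: "optimal m n c r T \<kappa> \<epsilon> Xm (qof Xm)"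
    unfolding optimal_def using XmS Xmin feas_S f_def by auto
  have mid: "cost m n c r \<kappa> \<epsilon> (\<lambda>i j. (X1 i j + X2 i j)/2) (\<lambda>j. (q1 j + q2 j)/2)
      < (cost m n c r \<kappa> \<epsilon> X1 q1 + cost m n c r \<kappa> \<epsilon> X2 q2)/2"
    and midf: "feasible m n r T (\<lambda>i j. (X1 i j + X2 i j)/2) (\<lambda>j. (q1 j + q2 j)/2)"
    if f1: "feasible m n r T X1 q1" and f2: "feasible m n r T X2 q2" and ne: "X1 \<noteq> X2"
    for X1 X2 q1 q2
  proof -
    show "feasible m n r T (\<lambda>i j. (X1 i j + X2 i j)/2) (\<lambda>j. (q1 j + q2 j)/2)"
      using f1 f2 by (auto simp: feasible_def sum.distrib sum_divide_distrib[symmetric] add_divide_distrib)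
    obtain i0 j0 where ij: "i0 < m" "j0 < n" "X1 i0 j0 \<noteq> X2 i0 j0"
    proof -
      obtain i j where "X1 i j \<noteq> X2 i j" using ne by (metis ext)
      moreover have "i < m" "j < n" using calculation f1 f2 unfolding feasible_def
        by (metis not_le)+
      ultimately show ?thesis using that by blast
    qed
    have A: "(\<Sum>i<m. \<Sum>j<n. \<kappa> i j * ((X1 i j + X2 i j)/2))
       = ((\<Sum>i<m. \<Sum>j<n. \<kappa> i j * X1 i j) + (\<Sum>i<m. \<Sum>j<n. \<kappa> i j * X2 i j))/2"
      by (simp add: sum.distrib sum_divide_distrib[symmetric] add_divide_distrib ring_distribs)
    have Bq: "(\<Sum>j<n. beta (c j) ((q1 j + q2 j)/2))
       \<le> ((\<Sum>j<n. beta (c j) (q1 j)) + (\<Sum>j<n. beta (c j) (q2 j)))/2"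
    proof -
      have "(\<Sum>j<n. beta (c j) ((q1 j + q2 j)/2)) \<le> (\<Sum>j<n. (beta (c j) (q1 j) + beta (c j) (q2 j))/2)"
        using cpos by (intro sum_mono beta_mid) auto
      then show ?thesis by (simp add: sum.distrib sum_divide_distrib[symmetric])
    qed
    have E: "(\<Sum>i<m. \<Sum>j<n. xlogx_r ((X1 i j + X2 i j)/2) (r i))
       < ((\<Sum>i<m. \<Sum>j<n. xlogx_r (X1 i j) (r i)) + (\<Sum>i<m. \<Sum>j<n. xlogx_r (X2 i j) (r i)))/2"
    proof -
      have "(\<Sum>i<m. \<Sum>j<n. xlogx_r ((X1 i j + X2 i j)/2) (r i))
          < (\<Sum>i<m. \<Sum>j<n. (xlogx_r (X1 i j) (r i) + xlogx_r (X2 i j) (r i))/2)"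
      proof (rule sum_strict_mono_ex1)
        show "\<forall>i\<in>{..<m}. (\<Sum>j<n. xlogx_r ((X1 i j + X2 i j)/2) (r i))
            \<le> (\<Sum>j<n. (xlogx_r (X1 i j) (r i) + xlogx_r (X2 i j) (r i))/2)"
          using f1 f2 rpos by (auto intro!: sum_mono xlog_mid simp: feasible_def)
        show "\<exists>i\<in>{..<m}. (\<Sum>j<n. xlogx_r ((X1 i j + X2 i j)/2) (r i))
            < (\<Sum>j<n. (xlogx_r (X1 i j) (r i) + xlogx_r (X2 i j) (r i))/2)"
        proof (intro bexI[of _ i0])
          show "(\<Sum>j<n. xlogx_r ((X1 i0 j + X2 i0 j)/2) (r i0))
            < (\<Sum>j<n. (xlogx_r (X1 i0 j) (r i0) + xlogx_r (X2 i0 j) (r i0))/2)"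
          proof (rule sum_strict_mono_ex1)
            show "\<forall>j\<in>{..<n}. xlogx_r ((X1 i0 j + X2 i0 j)/2) (r i0)
               \<le> (xlogx_r (X1 i0 j) (r i0) + xlogx_r (X2 i0 j) (r i0))/2"
              using f1 f2 rpos ij by (intro ballI xlog_mid) (auto simp: feasible_def)
            show "\<exists>j\<in>{..<n}. xlogx_r ((X1 i0 j + X2 i0 j)/2) (r i0)
               < (xlogx_r (X1 i0 j) (r i0) + xlogx_r (X2 i0 j) (r i0))/2"
              using f1 f2 rpos ij by (intro bexI[of _ j0] xlog_mid_strict) (auto simp: feasible_def)
          qed simp
        qed (use ij in simp)
      qed simp
      then show ?thesis by (simp add: sum.distrib sum_divide_distrib[symmetric])
    qed
    have "\<epsilon> * (\<Sum>i<m. \<Sum>j<n. xlogx_r ((X1 i j + X2 i j)/2) (r i))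
       < \<epsilon> * (((\<Sum>i<m. \<Sum>j<n. xlogx_r (X1 i j) (r i)) + (\<Sum>i<m. \<Sum>j<n. xlogx_r (X2 i j) (r i)))/2)"
      using E epos by (rule mult_strict_left_mono)
    then show "cost m n c r \<kappa> \<epsilon> (\<lambda>i j. (X1 i j + X2 i j)/2) (\<lambda>j. (q1 j + q2 j)/2)
      < (cost m n c r \<kappa> \<epsilon> X1 q1 + cost m n c r \<kappa> \<epsilon> X2 q2)/2"
      using A Bq unfolding cost_def by (simp add: field_simps)
  qed
  have uniq: "Xq = (Xm, qof Xm)" if o: "optimal m n c r T \<kappa> \<epsilon> (fst Xq) (snd Xq)" for Xq
  proof -
    obtain X q where Xq: "Xq = (X, q)" by (cases Xq)
    have fX: "feasible m n r T X q" and oX: "\<forall>Y p. feasible m n r T Y p \<longrightarrow>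
        cost m n c r \<kappa> \<epsilon> X q \<le> cost m n c r \<kappa> \<epsilon> Y p"
      using o Xq by (auto simp: optimal_def)
    have fm: "feasible m n r T Xm (qof Xm)" and om: "\<forall>Y p. feasible m n r T Y p \<longrightarrow>
        cost m n c r \<kappa> \<epsilon> Xm (qof Xm) \<le> cost m n c r \<kappa> \<epsilon> Y p"
      using optm by (auto simp: optimal_def)
    have "X = Xm"
    proof (rule ccontr)
      assume ne: "X \<noteq> Xm"
      have 1: "cost m n c r \<kappa> \<epsilon> X q \<le> cost m n c r \<kappa> \<epsilon> Xm (qof Xm)" using oX fm by blast
      have 2: "cost m n c r \<kappa> \<epsilon> Xm (qof Xm) \<le> cost m n c r \<kappa> \<epsilon> X q" using om fX by blast
      have 3: "cost m n c r \<kappa> \<epsilon> X q \<le> cost m n c r \<kappa> \<epsilon> (\<lambda>i j. (X i j + Xm i j)/2) (\<lambda>j. (q j + qof Xm j)/2)"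
        using oX midf[OF fX fm ne] by blast
      show False using aux_false[OF 1 2 3 mid[OF fX fm ne]] .
    qed
    moreover have "q = qof X" using fX feas_S by blast
    ultimately show ?thesis using Xq by simp
  qed
  show ?thesis
  proof
    show "\<exists>X q. feasible m n r T X q" using feas0 by blast
    show "\<exists>!Xq. optimal m n c r T \<kappa> \<epsilon> (fst Xq) (snd Xq)"
      using optm uniq by (intro ex1I[of _ "(Xm, qof Xm)"]) auto
  qed
qed

end
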